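(* Let $r>1$. There is a nonpositive constant $C=C(r)$ such that for every sequence $(r_k)_{k\ge1}$ of numbers in $(1,r)$ increasing to $r$ the limit $\lim_{k\to\infty}\gamma_{r_k}$ exists and $$\gamma_r\ge\lim_{k\to\infty}\gamma_{r_k}\ge C>-\infty .$$
   Context: $B_c(x,\rho)$ denotes the Euclidean ball in $\mathbb{C}^n$ and $|x|$ the Euclidean norm. For $\rho>1$, $\mathcal{F}_\rho$ is the class of plurisubharmonic functions $f:\mathbb{C}^n\to\mathbb{R}$ with $\sup_{B_c(0,\rho)}f=0$ and $\sup_{B_c(0,1)}f\ge -1$. For $f\in\mathcal{F}_\rho$ and $x\in B_c(0,1)$ set $$\gamma_\rho(f;x):=\sup_{B_c\left(x,\frac{\rho-|x|}{\rho}\right)} f,\qquad \gamma_\rho:=\inf_{f\in\mathcal{F}_\rho}\ \inf_{x\in B_c(0,1)}\gamma_\rho(f;x).$$ *)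

theory Defs
  imports "HOL-Analysis.Analysis"
begin

definition usc :: "('a::topological_space \<Rightarrow> real) \<Rightarrow> bool" where
  "usc f \<longleftrightarrow> (\<forall>x c. f x < c \<longrightarrow> (\<forall>\<^sub>F y in at x. f y < c))"

text \<open>Since \<open>f\<close> is real valued, the inequality forces the
  circle average to be finite, so integrability is part of the condition.\<close>
definition psh :: "(complex ^ 'n \<Rightarrow> real) \<Rightarrow> bool" where
  "psh f \<longleftrightarrow> usc f \<and>
     (\<forall>a b. set_integrable lborel {0..2*pi} (\<lambda>t. f (a + cis t *s b)) \<and>
            f a \<le> (1 / (2*pi)) * (LINT t:{0..2*pi}|lborel. f (a + cis t *s b)))"

definition Fclass :: "real \<Rightarrow> (complex ^ 'n \<Rightarrow> real) set" where
  "Fclass \<rho> = {f. psh f \<and> (SUP y\<in>ball 0 \<rho>. ereal (f y)) = 0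
                      \<and> (SUP y\<in>ball 0 1. ereal (f y)) \<ge> -1}"

definition gamma_fx :: "real \<Rightarrow> (complex ^ 'n \<Rightarrow> real) \<Rightarrow> complex ^ 'n \<Rightarrow> ereal" where
  "gamma_fx \<rho> f x = (SUP y\<in>ball x ((\<rho> - norm x) / \<rho>). ereal (f y))"

text \<open>\<open>\<gamma>\<^sub>\<rho>\<close> in dimension \<open>n = CARD('n)\<close>.\<close>
definition gamma :: "'n::finite itself \<Rightarrow> real \<Rightarrow> ereal" where
  "gamma _ \<rho> = (INF f\<in>(Fclass \<rho> :: (complex ^ 'n \<Rightarrow> real) set).
                   INF x\<in>(ball 0 1 :: (complex ^ 'n) set). gamma_fx \<rho> f x)"

end

theory Submission
  imports Defs
begin

lemma norm_cis_minus_1: "norm (cis t - 1) \<le> \<bar>t\<bar>"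
proof -
  have "(norm (cis t - 1))^2 = (cos t - 1)^2 + (sin t)^2"
    by (simp add: cmod_power2 cis.code)
  also have "\<dots> = 2 - 2 * cos t" using sin_cos_squared_add[of t] by (simp add: power2_eq_square algebra_simps)
  also have "\<dots> = 4 * (sin (t/2))^2" using cos_double_sin[of "t/2"] by simp
  also have "\<dots> \<le> t^2"
  proof -
    have "\<bar>sin (t/2)\<bar> \<le> \<bar>t/2\<bar>" by (rule abs_sin_x_le_abs_x)
    then have "(sin (t/2))^2 \<le> (t/2)^2" by (metis abs_le_square_iff)
    then show ?thesis by (simp add: power_divide)
  qed
  finally show ?thesis by (metis abs_le_square_iff abs_norm_cancel)
qed

lemma norm_smult_vec: "norm (c *s (b::complex^'n)) = norm c * norm b"
  unfolding norm_vec_def by (simp add: norm_mult L2_set_right_distrib)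

lemma norm_axis_c: "norm (axis i (c::complex)) = norm c"
  unfolding norm_vec_def L2_set_def axis_def
  by (simp add: if_distrib[of norm] if_distrib[of "\<lambda>x. x^2"] cong: if_cong)

lemma lint_indicator_const:
  fixes A s T :: real
  assumes "0 \<le> s" "s \<le> T"
  shows "(LINT t:{0..T}|lborel. (- A) * indicator {0..s} t) = - A * s"
proof -
  have "(LINT t:{0..T}|lborel. (- A) * indicator {0..s} t) = integral\<^sup>L lborel (\<lambda>t. (- A) * indicator {0..s} t)"
    unfolding set_lebesgue_integral_def using assms
    by (intro Bochner_Integration.integral_cong refl) (auto split: split_indicator)
  also have "\<dots> = - A * measure lborel {0..s}" by simp
  also have "\<dots> = - A * s" using assms by simp
  finally show ?thesis .
qed

lemma step_lemma:
  fixes f :: "complex^'n \<Rightarrow> real"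
  assumes psh: "psh f" and neg: "\<And>z. norm z < \<rho> \<Longrightarrow> f z \<le> 0"
    and A: "0 \<le> A" and eta: "0 < \<eta>" "\<eta> \<le> 1"
    and fw: "\<And>z. dist z w < \<eta> \<Longrightarrow> f z \<le> - A"
    and b: "norm b \<le> 2" and ab: "norm a + norm b < \<rho>" and abw: "dist (a + b) w < \<eta>/2"
  shows "f a \<le> - A * \<eta> / (16 * pi)"
proof -
  define F where "F t = f (a + cis t *s b)" for t
  define G where "G t = (- A) * indicator {0..\<eta>/8} t" for t :: real
  have intF: "set_integrable lborel {0..2*pi} F" and mv: "f a \<le> (1 / (2*pi)) * (LINT t:{0..2*pi}|lborel. F t)"
    using psh unfolding psh_def F_def by auto
  have intG: "set_integrable lborel {0..2*pi} G"
    unfolding G_def set_integrable_def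
    using eta by (intro integrable_mult_indicator integrable_mult_right integrable_real_indicator) auto
  have le: "F t \<le> G t" if t: "t \<in> {0..2*pi}" for t
  proof (cases "t \<le> \<eta>/8")
    case True
    have eq: "a + cis t *s b - w = (a + b - w) + (cis t - 1) *s b"
      by (simp add: vec_eq_iff algebra_simps)
    have d1: "dist (a + cis t *s b) w \<le> dist (a + b) w + norm ((cis t - 1) *s b)"
      unfolding dist_norm eq by (rule norm_triangle_ineq)
    have d2: "norm ((cis t - 1) *s b) \<le> t * 2"
    proof -
      have "norm ((cis t - 1) *s b) = norm (cis t - 1) * norm b" by (rule norm_smult_vec)
      also have "\<dots> \<le> \<bar>t\<bar> * 2" by (intro mult_mono norm_cis_minus_1 b) auto
      finally show ?thesis using t by simp
    qed
    have "dist (a + cis t *s b) w < \<eta>" using d1 d2 abw True eta by linarith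
    then have "F t \<le> - A" unfolding F_def by (rule fw)
    then show ?thesis using True t unfolding G_def by auto
  next
    case False
    have "norm (a + cis t *s b) \<le> norm a + norm b"
      using norm_triangle_ineq[of a "cis t *s b"] by (simp add: norm_smult_vec)
    then have "F t \<le> 0" unfolding F_def using neg ab by auto
    then show ?thesis using False unfolding G_def by auto
  qed
  have "(LINT t:{0..2*pi}|lborel. F t) \<le> (LINT t:{0..2*pi}|lborel. G t)"
    by (rule set_integral_mono[OF intF intG le])
  also have "\<dots> = - A * (\<eta>/8)" unfolding G_def
    using eta pi_gt3 by (intro lint_indicator_const) auto
  finally have "(1 / (2*pi)) * (LINT t:{0..2*pi}|lborel. F t) \<le> (1 / (2*pi)) * (- A * (\<eta>/8))"
    by (intro mult_left_mono) auto
  also have "\<dots> = - A * \<eta> / (16 * pi)" by (simp add: field_simps)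
  finally have "(1 / (2*pi)) * (LINT t:{0..2*pi}|lborel. F t) \<le> - A * \<eta> / (16 * pi)" .
  with mv show ?thesis by linarith
qed

definition eta0 :: "real \<Rightarrow> real" where "eta0 \<rho> = min 1 ((\<rho> - 1) / \<rho>)"
definition NN :: "real \<Rightarrow> nat" where "NN \<rho> = nat \<lceil>4 / (\<rho> - 1)\<rceil> + 1"
definition cc :: "real \<Rightarrow> real" where "cc \<rho> = eta0 \<rho> / 2 ^ NN \<rho> / (16 * pi)"

lemma eta0_props: assumes "1 < \<rho>" shows "0 < eta0 \<rho>" "eta0 \<rho> \<le> 1" "eta0 \<rho> \<le> \<rho> - 1"
    "eta0 \<rho> \<le> (\<rho> - 1) / \<rho>"
proof -
  have "(\<rho> - 1) / \<rho> \<le> (\<rho> - 1) / 1" using assms by (intro divide_left_mono) auto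
  then have "(\<rho> - 1) / \<rho> \<le> \<rho> - 1" by simp
  then show "0 < eta0 \<rho>" "eta0 \<rho> \<le> 1" "eta0 \<rho> \<le> \<rho> - 1" "eta0 \<rho> \<le> (\<rho> - 1) / \<rho>"
    using assms unfolding eta0_def by auto
qed

lemma cc_pos: "1 < \<rho> \<Longrightarrow> 0 < cc \<rho>"
  using eta0_props(1) unfolding cc_def by auto

lemma chain_lemma:
  fixes f :: "complex^'n \<Rightarrow> real"
  assumes psh: "psh f" and neg: "\<And>z. norm z < \<rho> \<Longrightarrow> f z \<le> 0" and rho: "1 < \<rho>"
    and x: "norm x < 1" and y: "norm y < 1" and K: "0 \<le> K"
    and fx: "\<And>z. dist z x < eta0 \<rho> \<Longrightarrow> f z \<le> - K"
  shows "f y \<le> - (K * cc \<rho> ^ NN \<rho>)"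
proof -
  define N where "N = NN \<rho>"
  define \<eta>0 where "\<eta>0 = eta0 \<rho>"
  define c where "c = cc \<rho>"
  define p where "p k = x + (real k / real N) *\<^sub>R (y - x)" for k
  have N1: "1 \<le> N" unfolding N_def NN_def by simp
  have "4 / (\<rho> - 1) \<le> real N" unfolding N_def NN_def by linarith
  then have "4 \<le> real N * (\<rho> - 1)" using rho by (simp add: divide_le_eq)
  then have N2: "2 / real N \<le> (\<rho> - 1) / 2" using N1 by (simp add: divide_le_eq mult.commute)
  have e: "0 < \<eta>0" "\<eta>0 \<le> 1" "\<eta>0 \<le> \<rho> - 1" using eta0_props[OF rho] unfolding \<eta>0_def by auto
  have c0: "0 \<le> c" using cc_pos[OF rho] unfolding c_def by simp
  have pn: "norm (p k) < 1" if "k \<le> N" for k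
  proof -
    define s where "s = real k / real N"
    have s: "0 \<le> s" "s \<le> 1" using that N1 unfolding s_def by auto
    have "p k = (1 - s) *\<^sub>R x + s *\<^sub>R y" unfolding p_def s_def by (simp add: algebra_simps)
    then have "norm (p k) \<le> (1 - s) * norm x + s * norm y"
      using norm_triangle_ineq[of "(1 - s) *\<^sub>R x" "s *\<^sub>R y"] s by simp
    also have "\<dots> < 1" by (rule convex_bound_lt) (use x y s in auto)
    finally show ?thesis .
  qed
  have pd: "p k - p (Suc k) = (- 1 / real N) *\<^sub>R (y - x)" for k
    unfolding p_def using N1 by (simp add: algebra_simps add_divide_distrib)
  have nb: "norm (p k - p (Suc k)) \<le> 2 / real N" for k
  proof -
    have "norm (y - x) \<le> 2" using norm_triangle_ineq4[of y x] x y by linarith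
    then show ?thesis unfolding pd using N1 by (simp add: divide_right_mono)
  qed
  have main: "\<forall>z. dist z (p k) < \<eta>0 / 2 ^ k \<longrightarrow> f z \<le> - (K * c ^ k)" if "k \<le> N" for k
    using that
  proof (induction k)
    case 0
    then show ?case using fx unfolding p_def \<eta>0_def by simp
  next
    case (Suc k)
    have IH: "\<And>z. dist z (p k) < \<eta>0 / 2 ^ k \<Longrightarrow> f z \<le> - (K * c ^ k)" using Suc by auto
    show ?case
    proof (intro allI impI)
      fix z assume z: "dist z (p (Suc k)) < \<eta>0 / 2 ^ Suc k"
      define \<eta> where "\<eta> = \<eta>0 / 2 ^ k"
      have etale: "\<eta> \<le> \<eta>0"
      proof -
        have "\<eta>0 / 2 ^ k \<le> \<eta>0 / 1" using e by (intro divide_left_mono one_le_power) auto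
        then show ?thesis unfolding \<eta>_def by simp
      qed
      have eta: "0 < \<eta>" "\<eta> \<le> 1" using e etale unfolding \<eta>_def by (simp, linarith)
      have z2: "dist z (p (Suc k)) < \<eta> / 2" using z unfolding \<eta>_def by simp
      have b2: "norm (p k - p (Suc k)) \<le> 2" 
      proof -
        have "2 / real N \<le> 2" using N1 by (simp add: divide_le_eq)
        then show ?thesis using nb[of k] by linarith
      qed
      have "norm z \<le> norm (p (Suc k)) + dist z (p (Suc k))"
        unfolding dist_norm by (rule norm_triangle_sub)
      then have "norm z < 1 + \<eta> / 2" using pn[OF Suc.prems] z2 by linarith
      then have ab: "norm z + norm (p k - p (Suc k)) < \<rho>" 
      proof -
        have h0: "\<eta> \<le> \<rho> - 1" using e(3) etale by (rule order_trans[rotated])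
        have h1: "\<eta> / 2 \<le> (\<rho> - 1) / 2" using h0 by (rule divide_right_mono) simp
        have h2: "norm (p k - p (Suc k)) \<le> (\<rho> - 1) / 2" using nb[of k] N2 by linarith
        have "norm z + norm (p k - p (Suc k)) < (1 + \<eta> / 2) + (\<rho> - 1) / 2"
          by (rule add_less_le_mono[OF \<open>norm z < 1 + \<eta> / 2\<close> h2])
        also have "\<dots> \<le> \<rho>" using h1 by (simp add: field_simps)
        finally show ?thesis .
      qed
      have abw: "dist (z + (p k - p (Suc k))) (p k) < \<eta> / 2"
        using z2 by (simp add: dist_norm algebra_simps)
      have A: "0 \<le> K * c ^ k" using K c0 by simp
      have "f z \<le> - (K * c ^ k) * \<eta> / (16 * pi)"
        by (rule step_lemma[OF psh neg A eta _ b2 ab abw]) (use IH \<eta>_def in auto)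
      also have "\<dots> \<le> - (K * c ^ k * c)"
      proof -
        have "c \<le> \<eta> / (16 * pi)"
        proof -
          have "(2::real) ^ k \<le> 2 ^ N" using Suc.prems by (intro power_increasing) auto
          then have "\<eta>0 / 2 ^ N \<le> \<eta>0 / 2 ^ k" using e by (intro divide_left_mono) auto
          then have "\<eta>0 / 2 ^ N / (16 * pi) \<le> \<eta>0 / 2 ^ k / (16 * pi)" by (rule divide_right_mono) simp
          then show ?thesis unfolding c_def cc_def \<eta>_def N_def \<eta>0_def .
        qed
        then have "K * c ^ k * c \<le> K * c ^ k * (\<eta> / (16 * pi))" using A by (rule mult_left_mono)
        then show ?thesis by simp
      qed
      finally show "f z \<le> - (K * c ^ Suc k)" by (simp add: mult.commute mult.left_commute)
    qed
  qed
  have "p N = y" unfolding p_def using N1 by simp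
  then show ?thesis using main[of N] e unfolding c_def N_def by auto
qed

lemma Fclass_neg:
  assumes "f \<in> Fclass \<rho>" "norm z < \<rho>"
  shows "f z \<le> 0"
proof -
  have "ereal (f z) \<le> (SUP y\<in>ball 0 \<rho>. ereal (f y))"
    by (rule SUP_upper) (use assms(2) in simp)
  also have "\<dots> = 0" using assms(1) unfolding Fclass_def by simp
  finally show ?thesis by simp
qed

lemma gamma_lower:
  assumes rho: "1 < \<rho>"
  shows "ereal (- 2 / cc \<rho> ^ NN \<rho>) \<le> gamma TYPE('n::finite) \<rho>"
  unfolding gamma_def
proof (intro INF_greatest)
  fix f :: "complex^'n \<Rightarrow> real" and x :: "complex^'n"
  assume fF: "f \<in> Fclass \<rho>" and xb: "x \<in> ball 0 1"
  define Q where "Q = cc \<rho> ^ NN \<rho>"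
  have Q: "0 < Q" unfolding Q_def using cc_pos[OF rho] by simp
  have psh: "psh f" using fF unfolding Fclass_def by simp
  have neg: "\<And>z. norm z < \<rho> \<Longrightarrow> f z \<le> 0" using fF Fclass_neg by blast
  have "ereal (-2) < (SUP y\<in>ball 0 1. ereal (f y))"
  proof -
    have "ereal (-2) < -1" by (simp add: one_ereal_def)
    also have "-1 \<le> (SUP y\<in>ball 0 1. ereal (f y))" using fF unfolding Fclass_def by simp
    finally show ?thesis .
  qed
  then obtain y where yb: "y \<in> ball (0::complex^'n) 1" and fy: "-2 < f y"
    by (auto simp: less_SUP_iff)
  have nx: "norm x < 1" using xb by simp
  define R where "R = (\<rho> - norm x) / \<rho>"
  have R: "eta0 \<rho> \<le> R"
  proof -
    have "(\<rho> - 1) / \<rho> \<le> (\<rho> - norm x) / \<rho>" using nx rho by (intro divide_right_mono) auto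
    then show ?thesis using eta0_props(4)[OF rho] unfolding R_def by linarith
  qed
  show "ereal (- 2 / Q) \<le> gamma_fx \<rho> f x"
  proof (rule ccontr)
    assume "\<not> ereal (- 2 / Q) \<le> gamma_fx \<rho> f x"
    then have lt: "gamma_fx \<rho> f x < ereal (- 2 / Q)" by simp
    have "ereal (f x) \<le> gamma_fx \<rho> f x"
      unfolding gamma_fx_def R_def[symmetric]
      by (rule SUP_upper) (use R eta0_props(1)[OF rho] in simp)
    then obtain s where S: "gamma_fx \<rho> f x = ereal s" using lt
      by (cases "gamma_fx \<rho> f x") auto
    have s: "s < - 2 / Q" using lt S by simp
    have "- 2 / Q < 0" using Q by simp
    then have K: "0 \<le> - s" using s by linarith
    have fz: "f z \<le> - (- s)" if "dist z x < eta0 \<rho>" for z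
    proof -
      have "z \<in> ball x R" using that R by (simp add: dist_commute)
      then have "ereal (f z) \<le> gamma_fx \<rho> f x"
        unfolding gamma_fx_def R_def[symmetric] by (rule SUP_upper)
      then show ?thesis using S by simp
    qed
    have "f y \<le> - (- s * Q)"
      unfolding Q_def by (rule chain_lemma[OF psh neg rho nx _ K fz]) (use yb in auto)
    then have "- s * Q < 2" using fy by linarith
    then have "- s < 2 / Q" using Q by (simp add: less_divide_eq)
    then show False using s by simp
  qed
qed

lemma usc_max_cont:
  assumes "usc f" "continuous_on UNIV h"
  shows "usc (\<lambda>z. max (f z) (h z))"
  unfolding usc_def
proof (intro allI impI)
  fix x c assume "max (f x) (h x) < c"
  then have "f x < c" "h x < c" by auto
  have "\<forall>\<^sub>F y in at x. f y < c" using assms(1) \<open>f x < c\<close> unfolding usc_def by blast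
  moreover have "(h \<longlongrightarrow> h x) (at x)"
    using assms(2) unfolding continuous_on_def by auto
  then have "\<forall>\<^sub>F y in at x. h y < c" using \<open>h x < c\<close> by (rule order_tendstoD)
  ultimately show "\<forall>\<^sub>F y in at x. max (f y) (h y) < c" by eventually_elim auto
qed

lemma circle_affine:
  fixes a b :: "complex^'n" and M \<rho> :: real and i :: 'n
  defines "h \<equiv> \<lambda>z::complex^'n. M * (Re (z $ i) / \<rho> - 1)"
  shows "set_integrable lborel {0..2*pi} (\<lambda>t. h (a + cis t *s b))"
    "(LINT t:{0..2*pi}|lborel. h (a + cis t *s b)) = 2 * pi * h a"
proof -
  define H where "H t = M * ((Re (a $ i) + (cos t * Re (b $ i) - sin t * Im (b $ i))) / \<rho> - 1)" for t
  have hH: "h (a + cis t *s b) = H t" for t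
    unfolding h_def H_def by (simp add: cis.code)
  have cont: "continuous_on {0..2*pi} H" unfolding H_def divide_inverse by (intro continuous_intros)
  show "set_integrable lborel {0..2*pi} (\<lambda>t. h (a + cis t *s b))"
    unfolding hH by (rule borel_integrable_atLeastAtMost'[OF cont])
  define FF where "FF t = M * ((Re (a $ i) * t + (sin t * Re (b $ i) + cos t * Im (b $ i))) / \<rho> - t)" for t
  have "(LINT t:{0..2*pi}|lborel. H t) = FF (2*pi) - FF 0"
    unfolding set_lebesgue_integral_def
  proof (rule integral_FTC_atLeastAtMost[OF _ _ cont])
    fix t
    show "(FF has_vector_derivative H t) (at t within {0..2*pi})"
      unfolding FF_def H_def divide_inverse has_real_derivative_iff_has_vector_derivative[symmetric]
      by (auto intro!: derivative_eq_intros simp: algebra_simps)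
  qed simp
  also have "\<dots> = 2 * pi * h a" unfolding FF_def h_def by (simp add: field_simps add_divide_distrib)
  finally show "(LINT t:{0..2*pi}|lborel. h (a + cis t *s b)) = 2 * pi * h a" unfolding hH .
qed

lemma psh_max_affine:
  fixes f :: "complex^'n \<Rightarrow> real"
  assumes psh: "psh f"
  shows "psh (\<lambda>z. max (f z) (M * (Re (z $ i) / \<rho> - 1)))"
proof -
  define h where "h = (\<lambda>z::complex^'n. M * (Re (z $ i) / \<rho> - 1))"
  have hc: "continuous_on UNIV h" unfolding h_def divide_inverse by (intro continuous_intros)
  have "usc (\<lambda>z. max (f z) (h z))" using psh hc usc_max_cont unfolding psh_def by blast
  moreover have "set_integrable lborel {0..2*pi} (\<lambda>t. max (f (a + cis t *s b)) (h (a + cis t *s b)))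
     \<and> max (f a) (h a) \<le> (1 / (2*pi)) * (LINT t:{0..2*pi}|lborel. max (f (a + cis t *s b)) (h (a + cis t *s b)))"
    for a b
  proof -
    define F where "F t = f (a + cis t *s b)" for t
    define H where "H t = h (a + cis t *s b)" for t
    have iF: "set_integrable lborel {0..2*pi} F" and mF: "f a \<le> (1 / (2*pi)) * (LINT t:{0..2*pi}|lborel. F t)"
      using psh unfolding psh_def F_def by auto
    have iH: "set_integrable lborel {0..2*pi} H" and mH: "(LINT t:{0..2*pi}|lborel. H t) = 2 * pi * h a"
      unfolding H_def h_def by (rule circle_affine)+
    have iM: "set_integrable lborel {0..2*pi} (\<lambda>t. max (F t) (H t))"
    proof -
      have "integrable lborel (\<lambda>t. max (indicator {0..2*pi} t *\<^sub>R F t) (indicator {0..2*pi} t *\<^sub>R H t))"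
        using iF iH unfolding set_integrable_def by (rule integrable_max)
      moreover have "(\<lambda>t. indicator {0..2*pi} t *\<^sub>R max (F t) (H t)) =
          (\<lambda>t. max (indicator {0..2*pi} t *\<^sub>R F t) (indicator {0..2*pi} t *\<^sub>R H t))"
        by (auto simp: fun_eq_iff split: split_indicator)
      ultimately show ?thesis unfolding set_integrable_def by simp
    qed
    have "(LINT t:{0..2*pi}|lborel. F t) \<le> (LINT t:{0..2*pi}|lborel. max (F t) (H t))"
      by (rule set_integral_mono[OF iF iM]) auto
    then have 1: "f a \<le> (1 / (2*pi)) * (LINT t:{0..2*pi}|lborel. max (F t) (H t))"
      using mF by (smt (verit) mult_left_mono pi_gt_zero divide_nonneg_nonneg)
    have "(LINT t:{0..2*pi}|lborel. H t) \<le> (LINT t:{0..2*pi}|lborel. max (F t) (H t))"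
      by (rule set_integral_mono[OF iH iM]) auto
    then have "2 * pi * h a \<le> (LINT t:{0..2*pi}|lborel. max (F t) (H t))" using mH by simp
    then have 2: "h a \<le> (1 / (2*pi)) * (LINT t:{0..2*pi}|lborel. max (F t) (H t))"
      by (simp add: field_simps)
    show ?thesis using iM 1 2 unfolding F_def H_def by simp
  qed
  ultimately show ?thesis unfolding psh_def h_def by blast
qed

lemma gamma_mono:
  assumes r1: "1 < \<rho>1" and r12: "\<rho>1 \<le> \<rho>2"
  shows "gamma TYPE('n::finite) \<rho>1 \<le> gamma TYPE('n) \<rho>2"
proof -
  have key: "gamma TYPE('n) \<rho>1 \<le> gamma_fx \<rho>2 f x"
    if fF: "f \<in> Fclass \<rho>2" and xb: "x \<in> ball (0::complex^'n) 1" for f x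
  proof -
    define i :: 'n where "i = undefined"
    define nx where "nx = norm x"
    have nx: "0 \<le> nx" "nx < 1" using xb unfolding nx_def by auto
    define R1 where "R1 = (\<rho>1 - nx) / \<rho>1"
    define R2 where "R2 = (\<rho>2 - nx) / \<rho>2"
    have R1R2: "R1 \<le> R2"
    proof -
      have "nx / \<rho>2 \<le> nx / \<rho>1" using nx r1 r12 by (intro divide_left_mono) auto
      moreover have "R1 = 1 - nx / \<rho>1" "R2 = 1 - nx / \<rho>2" unfolding R1_def R2_def using r1 r12
        by (auto simp: diff_divide_distrib)
      ultimately show ?thesis by linarith
    qed
    have R2pos: "0 < R2" unfolding R2_def using nx r1 r12 by auto
    define e where "e = 1 - (nx + R1) / \<rho>1"
    have e: "0 < e"
    proof -
      have q: "nx / \<rho>1 < 1" using nx r1 by simp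
      have "nx + R1 = 1 + nx / \<rho>1 * (\<rho>1 - 1)" unfolding R1_def using r1 by (simp add: field_simps)
      also have "\<dots> < 1 + 1 * (\<rho>1 - 1)" using q r1 by (intro add_strict_left_mono mult_strict_right_mono) auto
      finally have "nx + R1 < \<rho>1" by simp
      then have "(nx + R1) / \<rho>1 < 1" using r1 by simp
      then show ?thesis unfolding e_def by simp
    qed
    define M where "M = (\<bar>f x\<bar> + 1) / e"
    have M: "0 < M" unfolding M_def using e by simp
    define h where "h z = M * (Re (z $ i) / \<rho>1 - 1)" for z :: "complex^'n"
    define g where "g z = max (f z) (h z)" for z
    have fneg: "\<And>z. norm z < \<rho>2 \<Longrightarrow> f z \<le> 0" using fF Fclass_neg by blast
    have Re_le: "Re (z $ i) \<le> norm z" for z :: "complex^'n"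
      using complex_Re_le_cmod[of "z $ i"] Finite_Cartesian_Product.norm_nth_le[of z i] by linarith
    have gF: "g \<in> Fclass \<rho>1"
    proof -
      have psh: "psh g" unfolding g_def h_def
        using fF unfolding Fclass_def by (auto intro: psh_max_affine)
      have gneg: "g z \<le> 0" if "norm z < \<rho>1" for z
      proof -
        have "f z \<le> 0" using fneg that r12 by simp
        moreover have "Re (z $ i) / \<rho>1 \<le> 1" using Re_le[of z] that r1 by simp
        then have "h z \<le> 0" unfolding h_def using M by (simp add: mult_nonpos_nonneg mult_le_0_iff)
        ultimately show ?thesis unfolding g_def by simp
      qed
      have sup1: "(SUP y\<in>ball 0 \<rho>1. ereal (g y)) \<le> 0"
        by (rule SUP_least) (use gneg in simp)
      have sup2: "0 \<le> (SUP y\<in>ball 0 \<rho>1. ereal (g y))"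
      proof (rule ccontr)
        define S where "S = (SUP y\<in>ball 0 \<rho>1. ereal (g y))"
        assume "\<not> 0 \<le> (SUP y\<in>ball 0 \<rho>1. ereal (g y))"
        then have S0: "S < 0" unfolding S_def by simp
        have "ereal (g 0) \<le> S" unfolding S_def by (rule SUP_upper) (use r1 in simp)
        then obtain s where S: "S = ereal s" using S0 by (cases S) auto
        have s0: "s < 0" using S0 S by simp
        define \<epsilon> where "\<epsilon> = min (1/2) (- s / (2 * M))"
        have eps: "0 < \<epsilon>" "\<epsilon> < 1" "\<epsilon> \<le> - s / (2 * M)" unfolding \<epsilon>_def using s0 M by (auto simp: divide_neg_pos)
        define z :: "complex^'n" where "z = axis i (complex_of_real (\<rho>1 * (1 - \<epsilon>)))"
        have nz: "norm z = \<rho>1 * (1 - \<epsilon>)" unfolding z_def norm_axis_c norm_of_real using eps r1 by simp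
        have zb: "z \<in> ball 0 \<rho>1" using nz eps r1 by simp
        have hz: "h z = - M * \<epsilon>" unfolding h_def z_def using r1 by (simp add: axis_def field_simps)
        have "M * \<epsilon> \<le> M * (- s / (2 * M))" using M eps by (intro mult_left_mono) auto
        also have "\<dots> = - s / 2" using M by simp
        finally have "s < h z" using hz s0 by linarith
        then have "s < g z" unfolding g_def by simp
        moreover have "ereal (g z) \<le> S" unfolding S_def by (rule SUP_upper[OF zb])
        ultimately show False using S by simp
      qed
      have sup3: "(SUP y\<in>ball 0 1. ereal (f y)) \<le> (SUP y\<in>ball 0 1. ereal (g y))"
        by (rule SUP_mono) (force simp: g_def)
      have "-1 \<le> (SUP y\<in>ball 0 1. ereal (f y))" using fF unfolding Fclass_def by simp
      then show ?thesis unfolding Fclass_def using psh sup1 sup2 sup3 by auto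
    qed
    have "gamma TYPE('n) \<rho>1 \<le> gamma_fx \<rho>1 g x"
      unfolding gamma_def by (rule INF_lower2[OF gF], rule INF_lower[OF xb])
    also have "gamma_fx \<rho>1 g x \<le> gamma_fx \<rho>2 f x"
      unfolding gamma_fx_def
    proof (rule SUP_least)
      fix z assume z: "z \<in> ball x ((\<rho>1 - norm x) / \<rho>1)"
      then have zR1: "dist x z < R1" unfolding R1_def nx_def by simp
      define G where "G = (SUP y\<in>ball x ((\<rho>2 - norm x) / \<rho>2). ereal (f y))"
      have fzG: "ereal (f z) \<le> G" unfolding G_def
        by (rule SUP_upper) (use zR1 R1R2 in \<open>simp add: R2_def nx_def\<close>)
      have fxG: "ereal (f x) \<le> G" unfolding G_def
        by (rule SUP_upper) (use R2pos in \<open>simp add: R2_def nx_def\<close>)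
      have "norm z \<le> nx + dist x z" unfolding nx_def dist_norm
        using norm_triangle_sub[of z x] by (simp add: norm_minus_commute)
      then have "Re (z $ i) \<le> nx + R1" using Re_le[of z] zR1 by linarith
      then have "Re (z $ i) / \<rho>1 - 1 \<le> (nx + R1) / \<rho>1 - 1" using r1 by (simp add: divide_right_mono)
      then have "h z \<le> M * ((nx + R1) / \<rho>1 - 1)" unfolding h_def using M by (intro mult_left_mono) auto
      also have "\<dots> = - (\<bar>f x\<bar> + 1)"
      proof -
        have "(nx + R1) / \<rho>1 - 1 = - e" unfolding e_def by simp
        moreover have "M * e = \<bar>f x\<bar> + 1" unfolding M_def using e by simp
        ultimately show ?thesis by simp
      qed
      finally have "h z < f x" by linarith
      then have "ereal (h z) \<le> G" using fxG by (meson less_imp_le ereal_less_eq(3) order_trans)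
      then show "ereal (g z) \<le> G" using fzG unfolding g_def by (simp add: max_def)
    qed
    finally show ?thesis .
  qed
  have "gamma TYPE('n) \<rho>2 = (INF f\<in>(Fclass \<rho>2 :: (complex ^ 'n \<Rightarrow> real) set).
                   INF x\<in>(ball 0 1 :: (complex ^ 'n) set). gamma_fx \<rho>2 f x)" by (rule gamma_def)
  then show ?thesis using key by (auto intro!: INF_greatest)
qed

theorem lemma2p6:
  fixes r :: real
  assumes "r > 1"
  shows "\<exists>C::real. C \<le> 0 \<and>
    (\<forall>rs :: nat \<Rightarrow> real.
       (\<forall>k. 1 < rs k \<and> rs k < r) \<and> incseq rs \<and> rs \<longlonglongrightarrow> r \<longrightarrow>
       (\<exists>L::ereal. (\<lambda>k. gamma TYPE('n::finite) (rs k)) \<longlonglongrightarrow> L \<and>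
                   L \<le> gamma TYPE('n) r \<and> ereal C \<le> L))"
proof -
  define \<rho>0 where "\<rho>0 = (1 + r) / 2"
  have r0: "1 < \<rho>0" "\<rho>0 < r" unfolding \<rho>0_def using assms by auto
  define C where "C = - 2 / cc \<rho>0 ^ NN \<rho>0"
  have C0: "C \<le> 0" unfolding C_def using cc_pos[OF r0(1)] by simp
  have C1: "ereal C \<le> gamma TYPE('n) \<rho>0" unfolding C_def by (rule gamma_lower[OF r0(1)])
  show ?thesis
  proof (intro exI conjI allI impI)
    show "C \<le> 0" by (rule C0)
    fix rs :: "nat \<Rightarrow> real"
    assume H: "(\<forall>k. 1 < rs k \<and> rs k < r) \<and> incseq rs \<and> rs \<longlonglongrightarrow> r"
    then have b: "\<And>k. 1 < rs k" "\<And>k. rs k < r" and inc: "incseq rs" and lim: "rs \<longlonglongrightarrow> r" by auto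
    define g where "g k = gamma TYPE('n) (rs k)" for k
    have ginc: "incseq g" unfolding incseq_def g_def
    proof (intro allI impI)
      fix m n :: nat assume "m \<le> n"
      then have "rs m \<le> rs n" using inc unfolding incseq_def by blast
      then show "gamma TYPE('n) (rs m) \<le> gamma TYPE('n) (rs n)" by (rule gamma_mono[OF b(1)])
    qed
    have "g \<longlonglongrightarrow> (SUP k. g k)" by (rule LIMSEQ_SUP[OF ginc])
    then show "(\<lambda>k. gamma TYPE('n) (rs k)) \<longlonglongrightarrow> (SUP k. g k)" unfolding g_def .
    show "(SUP k. g k) \<le> gamma TYPE('n) r"
    proof (rule SUP_least)
      fix k show "g k \<le> gamma TYPE('n) r" unfolding g_def using b[of k] by (intro gamma_mono) auto
    qed
    have "\<forall>\<^sub>F k in sequentially. \<rho>0 < rs k" using lim r0(2) by (rule order_tendstoD(1))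
    then obtain k where k: "\<rho>0 < rs k" unfolding eventually_sequentially by auto
    have "ereal C \<le> gamma TYPE('n) \<rho>0" by (rule C1)
    also have "\<dots> \<le> g k" unfolding g_def using k r0 by (intro gamma_mono) auto
    also have "\<dots> \<le> (SUP k. g k)" by (rule SUP_upper) simp
    finally show "ereal C \<le> (SUP k. g k)" .
  qed
qed

end
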